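(* If $s\ge 3$ and $q\ge m+1$, then $\pi\ge 2n-3q-3m+1$.
   Context: $G$ is a set of size $n$ and $G(\circ)$, $G(\ast)$ are distinct groups on $G$ with the same identity element. $\mathrm{diff}(\circ,\ast)=\{(a,b):a\circ b\ne a\ast b\}$, $\mathrm{dist}(\circ,\ast)=|\mathrm{diff}(\circ,\ast)|$, $\mathrm{dist}_a=|\{b:a\circ b\ne a\ast b\}|$; $H=\{a:\mathrm{dist}_a=0\}$, $h=|H|$; $K=\{a:\mathrm{dist}_a<n/3\}$, $k=|K|$; $m=\min\{\mathrm{dist}_a:\mathrm{dist}_a>0\}$. Standing assumption: $m\ge 3$. Let $q=\lceil n/3\rceil$ and the profit $\pi=\mathrm{dist}(\circ,\ast)-((k-h)m+(n-k)q)$. Let $S=\{(a,b)\in\mathrm{diff}(\circ,\ast):a,b\in K,\ a\ne b\}$, $s=|S|$. *)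

theory Defs
  imports Complex_Main "HOL-Algebra.Group"
begin

text \<open>Two group structures on the same carrier G, given by binary operations
  f (written o in the paper) and g (written * in the paper).\<close>

definition diffset :: "'a set \<Rightarrow> ('a \<Rightarrow> 'a \<Rightarrow> 'a) \<Rightarrow> ('a \<Rightarrow> 'a \<Rightarrow> 'a) \<Rightarrow> ('a \<times> 'a) set" where
  "diffset G f g = {(a, b). a \<in> G \<and> b \<in> G \<and> f a b \<noteq> g a b}"

definition distance :: "'a set \<Rightarrow> ('a \<Rightarrow> 'a \<Rightarrow> 'a) \<Rightarrow> ('a \<Rightarrow> 'a \<Rightarrow> 'a) \<Rightarrow> nat" where
  "distance G f g = card (diffset G f g)"

definition dist_at :: "'a set \<Rightarrow> ('a \<Rightarrow> 'a \<Rightarrow> 'a) \<Rightarrow> ('a \<Rightarrow> 'a \<Rightarrow> 'a) \<Rightarrow> 'a \<Rightarrow> nat" where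
  "dist_at G f g a = card {b \<in> G. f a b \<noteq> g a b}"

definition Hset :: "'a set \<Rightarrow> ('a \<Rightarrow> 'a \<Rightarrow> 'a) \<Rightarrow> ('a \<Rightarrow> 'a \<Rightarrow> 'a) \<Rightarrow> 'a set" where
  "Hset G f g = {a \<in> G. dist_at G f g a = 0}"

definition Kset :: "'a set \<Rightarrow> ('a \<Rightarrow> 'a \<Rightarrow> 'a) \<Rightarrow> ('a \<Rightarrow> 'a \<Rightarrow> 'a) \<Rightarrow> 'a set" where
  "Kset G f g = {a \<in> G. real (dist_at G f g a) < real (card G) / 3}"

definition mval :: "'a set \<Rightarrow> ('a \<Rightarrow> 'a \<Rightarrow> 'a) \<Rightarrow> ('a \<Rightarrow> 'a \<Rightarrow> 'a) \<Rightarrow> nat" where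
  "mval G f g = Min {dist_at G f g a | a. a \<in> G \<and> dist_at G f g a > 0}"

definition qval :: "nat \<Rightarrow> nat" where
  "qval n = nat \<lceil>real n / 3\<rceil>"

definition profit :: "'a set \<Rightarrow> ('a \<Rightarrow> 'a \<Rightarrow> 'a) \<Rightarrow> ('a \<Rightarrow> 'a \<Rightarrow> 'a) \<Rightarrow> int" where
  "profit G f g = int (distance G f g)
     - ((int (card (Kset G f g)) - int (card (Hset G f g))) * int (mval G f g)
        + (int (card G) - int (card (Kset G f g))) * int (qval (card G)))"

definition Sset :: "'a set \<Rightarrow> ('a \<Rightarrow> 'a \<Rightarrow> 'a) \<Rightarrow> ('a \<Rightarrow> 'a \<Rightarrow> 'a) \<Rightarrow> ('a \<times> 'a) set" where
  "Sset G f g = {(a, b) \<in> diffset G f g. a \<in> Kset G f g \<and> b \<in> Kset G f g \<and> a \<noteq> b}"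

end

theory Submission
  imports Defs
begin

lemma grp_facts:
  assumes "group \<lparr>carrier = G, mult = f, one = e\<rparr>"
  shows "\<And>a b. a \<in> G \<Longrightarrow> b \<in> G \<Longrightarrow> f a b \<in> G"
    and "\<And>a b c. a \<in> G \<Longrightarrow> b \<in> G \<Longrightarrow> c \<in> G \<Longrightarrow> f (f a b) c = f a (f b c)"
    and "\<And>a b c. a \<in> G \<Longrightarrow> b \<in> G \<Longrightarrow> c \<in> G \<Longrightarrow> f a b = f a c \<Longrightarrow> b = c"
    and "\<And>a b c. a \<in> G \<Longrightarrow> b \<in> G \<Longrightarrow> c \<in> G \<Longrightarrow> f b a = f c a \<Longrightarrow> b = c"
proof -
  interpret F: group "\<lparr>carrier = G, mult = f, one = e\<rparr>" by (rule assms)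
  show "\<And>a b. a \<in> G \<Longrightarrow> b \<in> G \<Longrightarrow> f a b \<in> G"
    using F.m_closed by simp
  show "\<And>a b c. a \<in> G \<Longrightarrow> b \<in> G \<Longrightarrow> c \<in> G \<Longrightarrow> f (f a b) c = f a (f b c)"
    using F.m_assoc by simp
  show "\<And>a b c. a \<in> G \<Longrightarrow> b \<in> G \<Longrightarrow> c \<in> G \<Longrightarrow> f a b = f a c \<Longrightarrow> b = c"
    using F.Units_l_cancel F.Units_eq by simp
  show "\<And>a b c. a \<in> G \<Longrightarrow> b \<in> G \<Longrightarrow> c \<in> G \<Longrightarrow> f b a = f c a \<Longrightarrow> b = c"
    using F.right_cancel by simp
qed

lemma row_bound:
  assumes fin: "finite G"
    and gf: "group \<lparr>carrier = G, mult = f, one = e\<rparr>"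
    and gg: "group \<lparr>carrier = G, mult = g, one = e\<rparr>"
    and u: "u \<in> G" and v: "v \<in> G" and ne: "f u v \<noteq> g u v"
  shows "card G \<le> dist_at G f g (f u v) + dist_at G f g u + dist_at G f g v"
    and "card G \<le> dist_at G f g (g u v) + dist_at G f g u + dist_at G f g v"
proof -
  note F = grp_facts[OF gf] and Gg = grp_facts[OF gg]
  define c where "c = f u v"
  define d where "d = g u v"
  have c: "c \<in> G" using F(1) u v c_def by auto
  have d: "d \<in> G" using Gg(1) u v d_def by auto
  define X where "X = {y \<in> G. f v y = g v y \<and> f u (g v y) = g u (g v y)}"
  define Y where "Y = {y \<in> G. g v y \<in> {b \<in> G. f u b \<noteq> g u b}}"
  have XG: "\<And>y. y \<in> X \<Longrightarrow> f c y = g d y"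
  proof -
    fix y assume y: "y \<in> X"
    then have yG: "y \<in> G" and h1: "f v y = g v y" and h2: "f u (g v y) = g u (g v y)"
      by (auto simp: X_def)
    have "f c y = f u (f v y)" using F(2) u v yG c_def by simp
    also have "\<dots> = g u (g v y)" using h1 h2 by simp
    also have "\<dots> = g d y" using Gg(2) u v yG d_def by simp
    finally show "f c y = g d y" .
  qed
  have cd: "c \<noteq> d" using ne c_def d_def by simp
  have X1: "X \<subseteq> {b \<in> G. f c b \<noteq> g c b}"
  proof
    fix y assume y: "y \<in> X"
    then have yG: "y \<in> G" by (auto simp: X_def)
    have "g c y \<noteq> g d y" using Gg(4)[OF yG c d] cd by blast
    then show "y \<in> {b \<in> G. f c b \<noteq> g c b}" using XG[OF y] yG by auto
  qed
  have X2: "X \<subseteq> {b \<in> G. f d b \<noteq> g d b}"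
  proof
    fix y assume y: "y \<in> X"
    then have yG: "y \<in> G" by (auto simp: X_def)
    have "f c y \<noteq> f d y" using F(4)[OF yG c d] cd by blast
    then show "y \<in> {b \<in> G. f d b \<noteq> g d b}" using XG[OF y] yG by auto
  qed
  have cov: "G \<subseteq> X \<union> {b \<in> G. f v b \<noteq> g v b} \<union> Y"
    using Gg(1)[OF v] by (auto simp: X_def Y_def)
  have "inj_on (g v) Y" using Gg(3)[OF v] by (auto simp: inj_on_def Y_def)
  moreover have "g v ` Y \<subseteq> {b \<in> G. f u b \<noteq> g u b}" by (auto simp: Y_def)
  ultimately have cY: "card Y \<le> dist_at G f g u"
    unfolding dist_at_def using card_inj_on_le fin by (metis (no_types, lifting) finite_subset mem_Collect_eq subsetI)
  have "card G \<le> card (X \<union> {b \<in> G. f v b \<noteq> g v b} \<union> Y)"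
    using cov fin by (intro card_mono) (auto simp: X_def Y_def)
  also have "\<dots> \<le> card X + card {b \<in> G. f v b \<noteq> g v b} + card Y"
    by (meson add_le_mono card_Un_le le_refl order_trans)
  finally have main: "card G \<le> card X + dist_at G f g v + dist_at G f g u"
    using cY unfolding dist_at_def by linarith
  have "card X \<le> dist_at G f g c" unfolding dist_at_def
    using X1 fin by (intro card_mono) auto
  then show "card G \<le> dist_at G f g (f u v) + dist_at G f g u + dist_at G f g v"
    unfolding c_def[symmetric] using main by linarith
  have "card X \<le> dist_at G f g d" unfolding dist_at_def
    using X2 fin by (intro card_mono) auto
  then show "card G \<le> dist_at G f g (g u v) + dist_at G f g u + dist_at G f g v"
    unfolding d_def[symmetric] using main by linarith
qed


lemma distance_sum:
  assumes "finite G"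
  shows "distance G f g = (\<Sum>a\<in>G. dist_at G f g a)"
proof -
  have "diffset G f g = Sigma G (\<lambda>a. {b \<in> G. f a b \<noteq> g a b})"
    by (auto simp: diffset_def)
  then show ?thesis using assms by (simp add: distance_def dist_at_def)
qed

lemma profit_decomp:
  assumes fin: "finite G" and ne: "G \<noteq> {}"
  shows "profit G f g = (\<Sum>a\<in>Kset G f g - Hset G f g. int (dist_at G f g a) - int (mval G f g))
     + (\<Sum>a\<in>G - Kset G f g. int (dist_at G f g a) - int (qval (card G)))"
proof -
  let ?x = "\<lambda>a. int (dist_at G f g a)"
  let ?K = "Kset G f g" and ?H = "Hset G f g"
  have cpos: "card G > 0" using fin ne by (simp add: card_gt_0_iff)
  have HK: "?H \<subseteq> ?K" using cpos by (auto simp: Hset_def Kset_def)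
  have KG: "?K \<subseteq> G" by (auto simp: Kset_def)
  have fK: "finite ?K" using KG fin finite_subset by blast
  have fH: "finite ?H" using HK fK finite_subset by blast
  have s0: "(\<Sum>a\<in>?H. ?x a) = 0" by (simp add: Hset_def)
  have "int (distance G f g) = (\<Sum>a\<in>G. ?x a)"
    using distance_sum[OF fin] by simp
  also have "\<dots> = (\<Sum>a\<in>G - ?K. ?x a) + (\<Sum>a\<in>?K. ?x a)"
    using sum.subset_diff[OF KG fin] by simp
  also have "(\<Sum>a\<in>?K. ?x a) = (\<Sum>a\<in>?K - ?H. ?x a) + (\<Sum>a\<in>?H. ?x a)"
    using sum.subset_diff[OF HK fK] by simp
  finally have d: "int (distance G f g) = (\<Sum>a\<in>G - ?K. ?x a) + (\<Sum>a\<in>?K - ?H. ?x a)"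
    using s0 by simp
  have c1: "card G = card (G - ?K) + card ?K"
    using card_Diff_subset[OF fK KG] card_mono[OF fin KG] by simp
  have c2: "card ?K = card (?K - ?H) + card ?H"
    using card_Diff_subset[OF fH HK] card_mono[OF fK HK] by simp
  show ?thesis
    unfolding profit_def d using c1 c2
    by (simp add: sum_subtractf algebra_simps)
qed

lemma mval_le:
  assumes "finite G" "a \<in> G" "dist_at G f g a > 0"
  shows "mval G f g \<le> dist_at G f g a"
proof -
  have "{dist_at G f g a | a. a \<in> G \<and> dist_at G f g a > 0} \<subseteq> dist_at G f g ` G" by auto
  then have "finite {dist_at G f g a | a. a \<in> G \<and> dist_at G f g a > 0}"
    using assms(1) finite_subset by blast
  then show ?thesis unfolding mval_def using assms by (intro Min_le) auto
qed

lemma notK_ge_q: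
  assumes "a \<in> G" "a \<notin> Kset G f g"
  shows "qval (card G) \<le> dist_at G f g a"
proof -
  have "real (card G) / 3 \<le> real (dist_at G f g a)" using assms by (auto simp: Kset_def)
  then have "\<lceil>real (card G) / 3\<rceil> \<le> int (dist_at G f g a)"
    by (simp add: ceiling_le_iff)
  then show ?thesis unfolding qval_def by (simp only: nat_le_iff)
qed

lemma K_lt_q:
  assumes "a \<in> Kset G f g"
  shows "dist_at G f g a + 1 \<le> qval (card G)"
proof -
  have "real (dist_at G f g a) < real (card G) / 3" using assms by (auto simp: Kset_def)
  then have "int (dist_at G f g a) < \<lceil>real (card G) / 3\<rceil>"
    by (simp add: less_ceiling_iff)
  then show ?thesis unfolding qval_def by linarith
qed


lemma profit_lower:
  assumes fin: "finite G" and ne: "G \<noteq> {}"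
    and A: "A \<subseteq> Kset G f g - Hset G f g"
    and c: "c \<in> G" "c \<notin> Kset G f g" and d: "d \<in> G" "d \<notin> Kset G f g" and cd: "c \<noteq> d"
  shows "profit G f g \<ge> (\<Sum>a\<in>A. int (dist_at G f g a) - int (mval G f g))
     + (int (dist_at G f g c) - int (qval (card G))) + (int (dist_at G f g d) - int (qval (card G)))"
proof -
  let ?K = "Kset G f g" and ?H = "Hset G f g"
  have KG: "?K \<subseteq> G" by (auto simp: Kset_def)
  have fKH: "finite (?K - ?H)" using KG fin finite_subset by blast
  have "(\<Sum>a\<in>A. int (dist_at G f g a) - int (mval G f g))
      \<le> (\<Sum>a\<in>?K - ?H. int (dist_at G f g a) - int (mval G f g))"
  proof (rule sum_mono2[OF fKH A])
    fix a assume "a \<in> ?K - ?H - A"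
    then have "a \<in> G" "dist_at G f g a > 0" by (auto simp: Kset_def Hset_def)
    then show "0 \<le> int (dist_at G f g a) - int (mval G f g)" using mval_le[OF fin] by force
  qed
  moreover have "(\<Sum>a\<in>{c,d}. int (dist_at G f g a) - int (qval (card G)))
      \<le> (\<Sum>a\<in>G - ?K. int (dist_at G f g a) - int (qval (card G)))"
  proof (rule sum_mono2)
    show "finite (G - ?K)" using fin by simp
    show "{c, d} \<subseteq> G - ?K" using c d by auto
    fix a assume "a \<in> G - ?K - {c,d}"
    then show "0 \<le> int (dist_at G f g a) - int (qval (card G))" using notK_ge_q[of a G f g] by force
  qed
  ultimately show ?thesis using profit_decomp[OF fin ne, of f g] cd by simp
qed

theorem lemma10p1:
  fixes G :: "'a set" and f g :: "'a \<Rightarrow> 'a \<Rightarrow> 'a" and e :: 'a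
  assumes "finite G"
    and "group \<lparr>carrier = G, mult = f, one = e\<rparr>"
    and "group \<lparr>carrier = G, mult = g, one = e\<rparr>"
    and "\<exists>a\<in>G. \<exists>b\<in>G. f a b \<noteq> g a b"
    and "mval G f g \<ge> 3"
    and "card (Sset G f g) \<ge> 3"
    and "qval (card G) \<ge> mval G f g + 1"
  shows "profit G f g \<ge> 2 * int (card G) - 3 * int (qval (card G)) - 3 * int (mval G f g) + 1"
proof -
  note fin = assms(1) and gf = assms(2) and gg = assms(3)
  define x where "x = dist_at G f g"
  define m where "m = mval G f g"
  define q where "q = qval (card G)"
  define n where "n = card G"
  define K where "K = Kset G f g"
  define H where "H = Hset G f g"
  define S where "S = Sset G f g"
  have ne: "G \<noteq> {}" using assms(4) by auto
  have m3: "m \<ge> 3" using assms(5) m_def by simp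
  have qm: "q \<ge> m + 1" using assms(7) m_def q_def by simp
  have KG: "K \<subseteq> G" by (auto simp: K_def Kset_def)
  have Sprop: "\<And>a b. (a, b) \<in> S \<Longrightarrow> a \<in> K \<and> b \<in> K \<and> a \<noteq> b \<and> a \<in> G \<and> b \<in> G \<and> f a b \<noteq> g a b"
    by (auto simp: S_def Sset_def diffset_def K_def)
  have Kq: "\<And>a. a \<in> K \<Longrightarrow> x a + 1 \<le> q" unfolding K_def x_def q_def by (rule K_lt_q)
  have Kr: "\<And>a. a \<in> K \<Longrightarrow> real (x a) < real n / 3" by (auto simp: K_def Kset_def x_def n_def)
  have Hx: "\<And>a. a \<in> G \<Longrightarrow> a \<in> H \<longleftrightarrow> x a = 0" by (auto simp: H_def Hset_def x_def)
  have mle: "\<And>a. a \<in> G \<Longrightarrow> x a > 0 \<Longrightarrow> m \<le> x a" using mval_le[OF fin] unfolding m_def x_def by blast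
  have xpos: "\<And>a b. (a, b) \<in> S \<Longrightarrow> x a > 0"
  proof -
    fix a b assume ab: "(a, b) \<in> S"
    then have "b \<in> {b \<in> G. f a b \<noteq> g a b}" using Sprop by auto
    moreover have "finite {b \<in> G. f a b \<noteq> g a b}" using fin by simp
    ultimately show "x a > 0" unfolding x_def dist_at_def by (metis card_gt_0_iff empty_iff)
  qed
  have finS: "finite S" using fin Sprop by (intro finite_subset[of S "G \<times> G"]) auto
  have Sne: "S \<noteq> {}" using assms(6) S_def by auto
  define \<phi> where "\<phi> = (\<lambda>p. x (fst p) + x (snd p))"
  define p where "p = arg_min_on \<phi> S"
  have pS: "p \<in> S" and pmin: "\<And>p'. p' \<in> S \<Longrightarrow> \<phi> p \<le> \<phi> p'"
    using arg_min_if_finite[OF finS Sne, of \<phi>] unfolding p_def by (auto simp: not_less)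
  obtain u v where puv: "p = (u, v)" by (cases p)
  have uv: "u \<in> K" "v \<in> K" "u \<noteq> v" "u \<in> G" "v \<in> G" "f u v \<noteq> g u v"
    using Sprop pS puv by auto
  have xu: "x u > 0" using xpos pS puv by simp
  have uH: "u \<in> K - H" using xu uv Hx by auto
  define c where "c = f u v"
  define d where "d = g u v"
  have bc: "n \<le> x c + x u + x v" and bd: "n \<le> x d + x u + x v"
    using row_bound[OF fin gf gg uv(4,5,6)] unfolding c_def d_def x_def n_def by auto
  have cG: "c \<in> G" using grp_facts(1)[OF gf uv(4,5)] c_def by simp
  have dG: "d \<in> G" using grp_facts(1)[OF gg uv(4,5)] d_def by simp
  have cd: "c \<noteq> d" using uv c_def d_def by simp
  have "real n \<le> real (x c) + real (x u) + real (x v)" using bc by linarith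
  then have "\<not> real (x c) < real n / 3" using Kr[OF uv(1)] Kr[OF uv(2)] by linarith
  then have cK: "c \<notin> K" unfolding K_def Kset_def x_def n_def by auto
  have "real n \<le> real (x d) + real (x u) + real (x v)" using bd by linarith
  then have "\<not> real (x d) < real n / 3" using Kr[OF uv(1)] Kr[OF uv(2)] by linarith
  then have dK: "d \<notin> K" unfolding K_def Kset_def x_def n_def by auto
  have PL: "\<And>A. A \<subseteq> K - H \<Longrightarrow> profit G f g \<ge> (\<Sum>a\<in>A. int (x a) - int m)
     + (int (x c) - int q) + (int (x d) - int q)"
    using profit_lower[OF fin ne _ cG _ dG _ cd] cK dK unfolding K_def H_def x_def m_def q_def by blast
  have qn: "qval n = q" by (simp add: q_def n_def)
  have xuq: "x u + 1 \<le> q" "x v + 1 \<le> q" using Kq uv by auto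
  have mxu: "m \<le> x u" using mle uv xu by auto
  show ?thesis
  proof (cases "v \<in> H")
    case True
    then have xv: "x v = 0" using Hx uv by auto
    have "profit G f g \<ge> (int (x u) - int m) + (int (x c) - int q) + (int (x d) - int q)"
      using PL[of "{u}"] uH by simp
    then show ?thesis unfolding m_def[symmetric] n_def[symmetric] qn
      using bc bd xv xuq by linarith
  next
    case False
    then have xv: "x v > 0" using Hx uv by auto
    then have mxv: "m \<le> x v" using mle uv by auto
    have vH: "v \<in> K - H" using False uv by auto
    have c2: "card {(u,v),(v,u)} \<le> 2"
      by (metis card_2_iff insert_absorb is_singleton_altdef is_singleton_def le_refl one_le_numeral singletonI)
    have c3: "card S \<ge> 3" using assms(6) unfolding S_def .
    have "card S - card {(u,v),(v,u)} \<le> card (S - {(u,v),(v,u)})"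
      by (rule diff_card_le_card_Diff) simp
    then have "card (S - {(u,v),(v,u)}) > 0" using c2 c3 by linarith
    then obtain w y where wy: "(w, y) \<in> S" "(w, y) \<notin> {(u,v),(v,u)}"
      by (metis card_gt_0_iff DiffD1 DiffD2 all_not_in_conv surj_pair)
    have wyp: "w \<in> K" "y \<in> K" "w \<noteq> y" "w \<in> G" "y \<in> G" using Sprop wy by auto
    have xw: "x w > 0" using xpos wy by simp
    have phi: "x u + x v \<le> x w + x y" using pmin[OF wy(1)] puv \<phi>_def by simp
    obtain z where z: "z \<in> K - H" "z \<noteq> u" "z \<noteq> v" "x u + x v \<le> x z + q - 1"
    proof (cases "w \<in> {u, v}")
      case False
      then show ?thesis using that[of w] wyp xw Hx phi Kq[OF wyp(2)] by auto
    next
      case True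
      then have yuv: "y \<noteq> u" "y \<noteq> v" using wy wyp by auto
      have "x u + x v \<le> x w + x y" by (rule phi)
      then have "x y > 0" using True xu xv by auto
      then show ?thesis using that[of y] wyp yuv Hx phi Kq[OF wyp(1)] by auto
    qed
    have "profit G f g \<ge> (\<Sum>a\<in>{u,v,z}. int (x a) - int m) + (int (x c) - int q) + (int (x d) - int q)"
      by (rule PL) (use uH vH z in auto)
    moreover have "(\<Sum>a\<in>{u,v,z}. int (x a) - int m) = (int (x u) - int m) + (int (x v) - int m) + (int (x z) - int m)"
      using uv(3) z(2,3) by simp
    ultimately have "profit G f g \<ge> (int (x u) - int m) + (int (x v) - int m) + (int (x z) - int m) + (int (x c) - int q) + (int (x d) - int q)"
      by linarith
    then show ?thesis unfolding m_def[symmetric] n_def[symmetric] qn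
      using bc bd xuq z(4) qm mxu mxv by linarith
  qed
qed

end
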